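(* Consider the SBBS with $d=2$ balls, error probability $\varepsilon\in(0,1)$ and capacity $c\ge2$, with gap process $(W_t)_{t\ge0}$ on $\mathbb Z_{\ge0}$. Let $\tau=\inf\{t\ge1:W_t=0\}$. Then for every $w\in\mathbb Z_{\ge0}$, $P(\tau<\infty\mid W_0=w)=1$ and $\mathbb E[\tau\mid W_0=w]=\infty$.
   Context: Stochastic box-ball system (SBBS). Fix an error probability $\varepsilon\in[0,1]$ and a capacity $c\in\{1,2,\dots\}\cup\{\infty\}$. A configuration is $\zeta\in\{0,1\}^{\mathbb N}$, $\mathbb N=\{1,2,\dots\}$, with finitely many $1$'s (balls). Given $\zeta$, the stochastic carrier process $\Gamma$ is defined by $\Gamma(0)=0$ and recursively (with fresh independent randomness at each $k$): $\Gamma(k)=\Gamma(k-1)+1$ with probability $1-\varepsilon$ (and $\Gamma(k)=\Gamma(k-1)$ otherwise) if $\zeta(k)=1$ and $\Gamma(k-1)<c$; $\Gamma(k)=\Gamma(k-1)-1$ if $\zeta(k)=0$ and $\Gamma(k-1)\ge1$; $\Gamma(k)=\Gamma(k-1)$ otherwise. The new configuration is $\zeta'(k)=\mathbf 1(\Gamma(k)-\Gamma(k-1)=-1)+\mathbf 1(\Gamma(k)=\Gamma(k-1),\ \zeta(k)=1)$. Iterating independently gives the SBBS trajectory $(\zeta_t)_{t\in\mathbb Z_{\ge0}}$. With $d=2$ balls at positions $\zeta^{(1)}_t<\zeta^{(2)}_t$, the gap process is $W_t=\zeta^{(2)}_t-\zeta^{(1)}_t-1$, a Markov chain on $\mathbb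 Z_{\ge0}$. *)

theory Defs
  imports "HOL-Probability.Probability"
begin

text \<open>Configurations: \<zeta> :: nat \<Rightarrow> bool, only sites k \<ge> 1 are meaningful (site 0 is empty). The randomness used at site k when the carrier tries
  to pick up a ball is a coin b k :: bool, True (success) with probability 1 - \<epsilon>.\<close>

fun carrier :: "enat \<Rightarrow> (nat \<Rightarrow> bool) \<Rightarrow> (nat \<Rightarrow> bool) \<Rightarrow> nat \<Rightarrow> nat" where
  "carrier c \<zeta> b 0 = 0"
| "carrier c \<zeta> b (Suc k) =
     (let g = carrier c \<zeta> b k in
      if \<zeta> (Suc k) \<and> enat g < c then (if b (Suc k) then g + 1 else g)
      else if \<not> \<zeta> (Suc k) \<and> g \<ge> 1 then g - 1
      else g)"

definition sbbs_update :: "enat \<Rightarrow> (nat \<Rightarrow> bool) \<Rightarrow> (nat \<Rightarrow> bool) \<Rightarrow> nat \<Rightarrow> bool" where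
  "sbbs_update c \<zeta> b k =
     (k \<ge> 1 \<and>
       (carrier c \<zeta> b k + 1 = carrier c \<zeta> b (k - 1)
        \<or> (carrier c \<zeta> b k = carrier c \<zeta> b (k - 1) \<and> \<zeta> k)))"

fun sbbs_traj :: "enat \<Rightarrow> (nat \<Rightarrow> bool) \<Rightarrow> (nat \<times> nat \<Rightarrow> bool) \<Rightarrow> nat \<Rightarrow> nat \<Rightarrow> bool" where
  "sbbs_traj c \<zeta>0 \<omega> 0 = \<zeta>0"
| "sbbs_traj c \<zeta>0 \<omega> (Suc t) = sbbs_update c (sbbs_traj c \<zeta>0 \<omega> t) (\<lambda>k. \<omega> (t, k))"

definition coin_space :: "real \<Rightarrow> (nat \<times> nat \<Rightarrow> bool) measure" where
  "coin_space \<epsilon> = PiM UNIV (\<lambda>_. measure_pmf (bernoulli_pmf (1 - \<epsilon>)))"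

definition gap :: "(nat \<Rightarrow> bool) \<Rightarrow> nat" where
  "gap \<zeta> = Max {k. \<zeta> k} - Min {k. \<zeta> k} - 1"

definition hit_time :: "enat \<Rightarrow> (nat \<Rightarrow> bool) \<Rightarrow> (nat \<times> nat \<Rightarrow> bool) \<Rightarrow> enat" where
  "hit_time c \<zeta>0 \<omega> =
     (if \<exists>t\<ge>1. gap (sbbs_traj c \<zeta>0 \<omega> t) = 0
      then enat (LEAST t. t \<ge> 1 \<and> gap (sbbs_traj c \<zeta>0 \<omega> t) = 0)
      else \<infinity>)"

end

theory Submission
  imports Defs
begin


definition config :: "nat \<times> nat \<Rightarrow> nat \<Rightarrow> bool" where
  "config s k = (k = fst s \<or> k = fst s + snd s + 1)"

definition step :: "nat \<times> nat \<Rightarrow> bool \<Rightarrow> bool \<Rightarrow> nat \<times> nat" where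
  "step s a b = (if snd s = 0
     then (fst s + (if a then (if b then 2 else 1) else 0), if \<not> a \<and> b then 1 else 0)
     else (fst s + (if a then 1 else 0), if a \<and> \<not> b then snd s - 1 else if b \<and> \<not> a then snd s + 1 else snd s))"

definition Cf :: "nat \<Rightarrow> nat \<Rightarrow> (nat \<Rightarrow> bool) \<Rightarrow> nat \<Rightarrow> nat" where
  "Cf x w b k = (if w = 0 then
      (if k < x then 0 else if k = x then (if b x then 1 else 0)
       else (if b x then 1 else 0) + (if b (x+1) then 1 else 0) - (k - (x+1)))
     else (if k = x then (if b x then 1 else 0) else if k = x + w + 1 then (if b (x+w+1) then 1 else 0) else 0))"

lemma carrier_closed:
  assumes "x \<ge> 1" and c: "\<And>g. g \<le> 1 \<Longrightarrow> enat g < c"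
  shows "carrier c (config (x,w)) b k = Cf x w b k"
proof (induction k)
  case 0
  then show ?case using assms by (simp add: Cf_def)
next
  case (Suc k)
  have c0: "enat 0 < c" and c1: "enat 1 < c" using c by auto
  show ?case using Suc assms(1) c0 c1
    by (auto simp: Cf_def config_def Let_def split: if_splits)
qed

lemma update_config:
  assumes "x \<ge> 1" and c: "\<And>g. g \<le> 1 \<Longrightarrow> enat g < c"
  shows "sbbs_update c (config (x,w)) b = config (step (x,w) (b x) (b (x+w+1)))"
proof
  fix k
  have cc: "carrier c (config (x,w)) b j = Cf x w b j" for j using carrier_closed[OF assms] .
  show "sbbs_update c (config (x,w)) b k = config (step (x,w) (b x) (b (x+w+1))) k"
    unfolding sbbs_update_def cc using assms(1)
    by (cases "k = 0") (auto simp: Cf_def config_def step_def split: if_splits)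
qed

fun pos :: "nat \<times> nat \<Rightarrow> (nat \<times> nat \<Rightarrow> bool) \<Rightarrow> nat \<Rightarrow> nat \<times> nat" where
  "pos s \<omega> 0 = s"
| "pos s \<omega> (Suc t) = step (pos s \<omega> t) (\<omega> (t, fst (pos s \<omega> t)))
      (\<omega> (t, fst (pos s \<omega> t) + snd (pos s \<omega> t) + 1))"

definition shift :: "(nat \<times> nat \<Rightarrow> bool) \<Rightarrow> nat \<times> nat \<Rightarrow> bool" where
  "shift \<omega> = (\<lambda>n. \<omega> (Suc (fst n), snd n))"

abbreviation nxt :: "nat \<times> nat \<Rightarrow> (nat \<times> nat \<Rightarrow> bool) \<Rightarrow> nat \<times> nat" where
  "nxt s \<omega> \<equiv> step s (\<omega> (0, fst s)) (\<omega> (0, fst s + snd s + 1))"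

lemma pos_shift: "pos s \<omega> (Suc t) = pos (nxt s \<omega>) (shift \<omega>) t"
  by (induction t) (auto simp: shift_def)

lemma fst_step_ge: "fst (step s a b) \<ge> fst s"
  by (auto simp: step_def)

lemma fst_pos_ge: "fst (pos s \<omega> t) \<ge> fst s"
  by (induction t) (auto intro: order_trans[OF _ fst_step_ge])

lemma traj_pos:
  assumes "fst s \<ge> 1" and c: "\<And>g. g \<le> 1 \<Longrightarrow> enat g < c"
  shows "sbbs_traj c (config s) \<omega> t = config (pos s \<omega> t)"
proof (induction t)
  case 0
  then show ?case by simp
next
  case (Suc t)
  have x: "fst (pos s \<omega> t) \<ge> 1" using fst_pos_ge[of s \<omega> t] assms(1) by simp
  show ?case using update_config[OF x c, of "snd (pos s \<omega> t)" "\<lambda>k. \<omega> (t, k)"] Suc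
    by simp
qed

lemma gap_config: "gap (config s) = snd s"
proof -
  have "{k. config s k} = {fst s, fst s + snd s + 1}" by (auto simp: config_def)
  then show ?thesis by (simp add: gap_def)
qed

definition H :: "nat \<times> nat \<Rightarrow> (nat \<times> nat \<Rightarrow> bool) \<Rightarrow> enat" where
  "H s \<omega> = (if \<exists>t. snd (pos s \<omega> t) = 0 then enat (LEAST t. snd (pos s \<omega> t) = 0) else \<infinity>)"

lemma H_zero: "snd s = 0 \<Longrightarrow> H s \<omega> = 0"
  unfolding H_def by (auto intro!: exI[of _ 0] Least_eq_0 simp: zero_enat_def)

lemma H_step:
  assumes "snd s \<noteq> 0" shows "H s \<omega> = eSuc (H (nxt s \<omega>) (shift \<omega>))"
proof (cases "\<exists>t. snd (pos s \<omega> t) = 0")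
  case True
  then obtain t where t: "snd (pos s \<omega> t) = 0" by blast
  with assms obtain t' where t': "t = Suc t'" by (cases t) auto
  have ex2: "\<exists>t. snd (pos (nxt s \<omega>) (shift \<omega>) t) = 0" using t t' pos_shift by metis
  have "(LEAST t. snd (pos s \<omega> t) = 0) = Suc (LEAST t. snd (pos s \<omega> (Suc t)) = 0)"
    by (rule Least_Suc[of "\<lambda>t. snd (pos s \<omega> t) = 0" t, OF t]) (use assms in simp)
  then show ?thesis using True ex2 by (simp add: H_def pos_shift eSuc_enat del: pos.simps(2))
next
  case False
  have F2: "\<not> (\<exists>t. snd (pos (nxt s \<omega>) (shift \<omega>) t) = 0)" using False pos_shift by metis
  have "H s \<omega> = \<infinity>" unfolding H_def by (rule if_not_P[OF False])
  moreover have "H (nxt s \<omega>) (shift \<omega>) = \<infinity>" unfolding H_def by (rule if_not_P[OF F2])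
  ultimately show ?thesis by simp
qed

lemma hit_time_eq:
  assumes "fst s \<ge> 1" and c: "\<And>g. g \<le> 1 \<Longrightarrow> enat g < c"
  shows "hit_time c (config s) \<omega> = eSuc (H (nxt s \<omega>) (shift \<omega>))"
proof -
  have g: "gap (sbbs_traj c (config s) \<omega> t) = snd (pos s \<omega> t)" for t
    using traj_pos[OF assms] gap_config by simp
  have ht: "hit_time c (config s) \<omega> = (if \<exists>t\<ge>1. snd (pos s \<omega> t) = 0
      then enat (LEAST t. t \<ge> 1 \<and> snd (pos s \<omega> t) = 0) else \<infinity>)"
    unfolding hit_time_def g ..
  have e1: "(\<exists>t\<ge>1. snd (pos s \<omega> t) = 0) \<longleftrightarrow> (\<exists>t. snd (pos (nxt s \<omega>) (shift \<omega>) t) = 0)"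
    by (metis pos_shift One_nat_def Suc_le_D Suc_le_mono zero_less_Suc less_eq_Suc_le)
  show ?thesis
  proof (cases "\<exists>t. snd (pos (nxt s \<omega>) (shift \<omega>) t) = 0")
    case True
    then obtain t where t: "snd (pos s \<omega> (Suc t)) = 0" using pos_shift by metis
    have "(LEAST t. t \<ge> 1 \<and> snd (pos s \<omega> t) = 0) = Suc (LEAST t. Suc t \<ge> 1 \<and> snd (pos s \<omega> (Suc t)) = 0)"
      by (rule Least_Suc[of "\<lambda>t. t \<ge> 1 \<and> snd (pos s \<omega> t) = 0" "Suc t"]) (use t in auto)
    also have "\<dots> = Suc (LEAST t. snd (pos (nxt s \<omega>) (shift \<omega>) t) = 0)"
      unfolding pos_shift by simp
    finally have L: "(LEAST t. t \<ge> 1 \<and> snd (pos s \<omega> t) = 0) = Suc (LEAST t. snd (pos (nxt s \<omega>) (shift \<omega>) t) = 0)" .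
    have T1: "\<exists>t\<ge>1. snd (pos s \<omega> t) = 0" using True e1 by blast
    have "hit_time c (config s) \<omega> = enat (LEAST t. t \<ge> 1 \<and> snd (pos s \<omega> t) = 0)" unfolding ht by (rule if_P[OF T1])
    moreover have "H (nxt s \<omega>) (shift \<omega>) = enat (LEAST t. snd (pos (nxt s \<omega>) (shift \<omega>) t) = 0)" unfolding H_def by (rule if_P[OF True])
    ultimately show ?thesis using L by (simp add: eSuc_enat)
  next
    case False
    have F1: "\<not> (\<exists>t\<ge>1. snd (pos s \<omega> t) = 0)" using False e1 by blast
    have "hit_time c (config s) \<omega> = \<infinity>" unfolding ht by (rule if_not_P[OF F1])
    moreover have "H (nxt s \<omega>) (shift \<omega>) = \<infinity>" unfolding H_def by (rule if_not_P[OF False])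
    ultimately show ?thesis by simp
  qed
qed

lemma init_config:
  assumes "card {k. \<zeta>0 k} = 2" and "\<not> \<zeta>0 0"
  shows "\<exists>x w. x \<ge> 1 \<and> \<zeta>0 = config (x, w)"
proof -
  obtain a b where ab: "{k. \<zeta>0 k} = {a, b}" "a \<noteq> b" using assms(1) card_2_iff by metis
  define x where "x = min a b"
  define y where "y = max a b"
  have xy: "x < y" "{k. \<zeta>0 k} = {x, y}" using ab by (auto simp: x_def y_def min_def max_def)
  have "x \<ge> 1" using xy assms(2) by (metis Collect_mem_eq insertI1 less_one not_le mem_Collect_eq)
  moreover have "\<zeta>0 = config (x, y - x - 1)"
    using xy by (auto simp: config_def fun_eq_iff set_eq_iff)
  ultimately show ?thesis by blast
qed



lemma meas_upd:
  assumes "a \<in> space (M j)"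
  shows "(\<lambda>X. X(j := a)) \<in> measurable (PiM J M) (PiM (insert j J) M)"
proof -
  have "(\<lambda>X i. (X(j := a)) i) \<in> measurable (PiM J M) (PiM (insert j J) M)"
  proof (rule measurable_PiM_single')
    fix i assume "i \<in> insert j J"
    then show "(\<lambda>X. (X(j := a)) i) \<in> measurable (PiM J M) (M i)"
      using assms by (cases "i = j") auto
  next
    show "(\<lambda>X i. (X(j := a)) i) \<in> space (PiM J M) \<rightarrow> (\<Pi>\<^sub>E i\<in>insert j J. space (M i))"
      using assms by (auto simp: space_PiM PiE_iff extensional_def split: if_split_asm)
  qed
  then show ?thesis by (simp add: fun_upd_def)
qed

lemma meas_upd_pair:
  "(\<lambda>(x, X). X(j := x)) \<in> measurable (M j \<Otimes>\<^sub>M PiM J M) (PiM (insert j J) M)"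
proof -
  have "(\<lambda>p i. (case p of (x, X) \<Rightarrow> X(j := x)) i) \<in> measurable (M j \<Otimes>\<^sub>M PiM J M) (PiM (insert j J) M)"
  proof (rule measurable_PiM_single')
    fix i assume "i \<in> insert j J"
    then show "(\<lambda>p. (case p of (x, X) \<Rightarrow> X(j := x)) i) \<in> measurable (M j \<Otimes>\<^sub>M PiM J M) (M i)"
      by (cases "i = j") (auto simp: case_prod_beta)
  next
    show "(\<lambda>p i. (case p of (x, X) \<Rightarrow> X(j := x)) i) \<in> space (M j \<Otimes>\<^sub>M PiM J M) \<rightarrow> (\<Pi>\<^sub>E i\<in>insert j J. space (M i))"
      by (auto simp: space_pair_measure space_PiM PiE_iff extensional_def split: if_split_asm)
  qed
  then show ?thesis by (simp add: fun_upd_def case_prod_beta)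
qed

lemma split_PiM:
  assumes M: "\<And>i. i \<in> insert j J \<Longrightarrow> prob_space (M i)"
    and f: "f \<in> borel_measurable (PiM (insert j J) M)"
  shows "(\<integral>\<^sup>+\<omega>. f \<omega> \<partial>PiM (insert j J) M) = (\<integral>\<^sup>+a. \<integral>\<^sup>+X. f (X(j := a)) \<partial>PiM J M \<partial>M j)"
proof -
  interpret Mj: prob_space "M j" using M by auto
  interpret PJ: prob_space "PiM J M" using M by (intro prob_space_PiM) auto
  have "(\<integral>\<^sup>+\<omega>. f \<omega> \<partial>PiM (insert j J) M) =
      (\<integral>\<^sup>+\<omega>. f \<omega> \<partial>distr (M j \<Otimes>\<^sub>M PiM J M) (PiM (insert j J) M) (\<lambda>(x, X). X(j := x)))"
    using distr_pair_PiM_eq_PiM[of J M j] M by simp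
  also have "\<dots> = (\<integral>\<^sup>+p. f (case p of (x, X) \<Rightarrow> X(j := x)) \<partial>(M j \<Otimes>\<^sub>M PiM J M))"
    by (rule nn_integral_distr[OF meas_upd_pair]) (use f in simp)
  also have "\<dots> = (\<integral>\<^sup>+a. \<integral>\<^sup>+X. f (X(j := a)) \<partial>PiM J M \<partial>M j)"
    using PJ.nn_integral_fst[OF measurable_compose[OF meas_upd_pair f]] by simp
  finally show ?thesis .
qed

lemma int_bool_pmf: "(\<integral>\<^sup>+a. f a \<partial>measure_pmf (p :: bool pmf)) = (\<Sum>a\<in>UNIV. ennreal (pmf p a) * f a)"
  by (simp add: nn_integral_measure_pmf nn_integral_count_space_finite)

lemma comp_meas:
  "(\<lambda>\<omega>. \<omega> n) \<in> measurable (PiM UNIV (\<lambda>_. measure_pmf p)) (count_space UNIV)"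
  by (rule measurable_compose[OF measurable_component_singleton measurable_ident_sets]) auto

lemma shift_meas:
  "shift \<in> measurable (PiM J (\<lambda>_. measure_pmf p)) (PiM UNIV (\<lambda>_. measure_pmf p))"
  if "\<And>n. (Suc (fst n), snd n) \<in> J"
proof -
  have "(\<lambda>\<omega> n. \<omega> (Suc (fst n), snd n)) \<in> measurable (PiM J (\<lambda>_. measure_pmf p)) (PiM UNIV (\<lambda>_. measure_pmf p))"
    by (rule measurable_PiM_single') (use that in auto)
  then show ?thesis by (simp add: shift_def[abs_def])
qed

lemma shift_distr:
  assumes "\<And>n. (Suc (fst n), snd n) \<in> J"
  shows "distr (PiM J (\<lambda>_. measure_pmf p)) (PiM UNIV (\<lambda>_. measure_pmf p)) shift = PiM UNIV (\<lambda>_. measure_pmf p)"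
proof -
  have "distr (PiM J (\<lambda>_. measure_pmf p)) (PiM UNIV (\<lambda>_. measure_pmf p)) (\<lambda>\<omega>. \<lambda>n\<in>UNIV. \<omega> (Suc (fst n), snd n))
     = PiM UNIV (\<lambda>_. measure_pmf p)"
    using distr_PiM_reindex[of J "\<lambda>_. measure_pmf p" "\<lambda>n. (Suc (fst n), snd n)" UNIV] assms
    by (simp add: prob_space_measure_pmf inj_on_def)
  moreover have "(\<lambda>\<omega>. \<lambda>n\<in>UNIV. \<omega> (Suc (fst n), snd n)) = shift"
    by (simp add: shift_def fun_eq_iff)
  ultimately show ?thesis by simp
qed

lemma FS:
  fixes G :: "bool \<Rightarrow> bool \<Rightarrow> (nat \<times> nat \<Rightarrow> bool) \<Rightarrow> ennreal"
  assumes xy: "x \<noteq> y" and G: "\<And>a b. G a b \<in> borel_measurable (PiM UNIV (\<lambda>_. measure_pmf p))"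
  shows "(\<integral>\<^sup>+\<omega>. G (\<omega> (0,x)) (\<omega> (0,y)) (shift \<omega>) \<partial>PiM UNIV (\<lambda>_. measure_pmf p))
    = (\<Sum>a\<in>UNIV. \<Sum>b\<in>UNIV. ennreal (pmf p a) * ennreal (pmf p b) * \<integral>\<^sup>+\<omega>. G a b \<omega> \<partial>PiM UNIV (\<lambda>_. measure_pmf p))"
proof -
  define M where "M = (\<lambda>_::nat\<times>nat. measure_pmf p)"
  define J where "J = UNIV - {(0::nat,x),(0,y)}"
  define J1 where "J1 = insert (0,y) J"
  define F where "F \<omega> = G (\<omega> (0,x)) (\<omega> (0,y)) (shift \<omega>)" for \<omega>
  have U: "UNIV = insert (0,x) J1" by (auto simp: J1_def J_def)
  have PM: "\<And>i. prob_space (M i)" by (simp add: M_def prob_space_measure_pmf)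
  have shJ: "\<And>n. (Suc (fst n), snd n) \<in> J" by (auto simp: J_def)
  have Fm: "F \<in> borel_measurable (PiM UNIV M)"
  proof -
    have "(\<lambda>\<omega>. G a (\<omega> (0,y)) (shift \<omega>)) \<in> borel_measurable (PiM UNIV M)" for a
      unfolding M_def
      by (rule measurable_compose_countable[OF measurable_compose[OF shift_meas G] comp_meas]) simp
    then show ?thesis unfolding F_def M_def by (rule measurable_compose_countable[OF _ comp_meas])
  qed
  have sp: "a \<in> space (M i)" for a i by (simp add: M_def)
  have "(\<integral>\<^sup>+\<omega>. F \<omega> \<partial>PiM UNIV M) = (\<integral>\<^sup>+\<omega>. F \<omega> \<partial>PiM (insert (0,x) J1) M)" using U by simp
  also have "\<dots> = (\<integral>\<^sup>+a. \<integral>\<^sup>+X. F (X((0,x) := a)) \<partial>PiM J1 M \<partial>M (0,x))"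
    by (rule split_PiM) (use PM Fm U in auto)
  also have "\<dots> = (\<integral>\<^sup>+a. \<integral>\<^sup>+b. \<integral>\<^sup>+Z. F (Z((0,y) := b, (0,x) := a)) \<partial>PiM J M \<partial>M (0,y) \<partial>M (0,x))"
  proof (rule nn_integral_cong)
    fix a
    have "(\<lambda>X. F (X((0,x) := a))) \<in> borel_measurable (PiM (insert (0,y) J) M)"
      by (rule measurable_compose[OF meas_upd[of a M "(0,x)", OF sp]]) (use Fm U J1_def in simp)
    then show "(\<integral>\<^sup>+X. F (X((0,x) := a)) \<partial>PiM J1 M) = (\<integral>\<^sup>+b. \<integral>\<^sup>+Z. F (Z((0,y) := b, (0,x) := a)) \<partial>PiM J M \<partial>M (0,y))"
      unfolding J1_def by (rule split_PiM[OF PM])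
  qed
  also have "\<dots> = (\<integral>\<^sup>+a. \<integral>\<^sup>+b. \<integral>\<^sup>+Z. G a b Z \<partial>PiM UNIV M \<partial>M (0,y) \<partial>M (0,x))"
  proof (intro nn_integral_cong)
    fix a b
    have "(\<integral>\<^sup>+Z. F (Z((0,y) := b, (0,x) := a)) \<partial>PiM J M) = (\<integral>\<^sup>+Z. G a b (shift Z) \<partial>PiM J M)"
      using xy by (simp add: F_def shift_def)
    also have "\<dots> = (\<integral>\<^sup>+Z. G a b Z \<partial>distr (PiM J M) (PiM UNIV M) shift)"
      by (rule nn_integral_distr[symmetric]) (use shift_meas[OF shJ] G in \<open>simp_all add: M_def\<close>)
    also have "\<dots> = (\<integral>\<^sup>+Z. G a b Z \<partial>PiM UNIV M)"
      using shift_distr[OF shJ] by (simp add: M_def)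
    finally show "(\<integral>\<^sup>+Z. F (Z((0,y) := b, (0,x) := a)) \<partial>PiM J M) = (\<integral>\<^sup>+Z. G a b Z \<partial>PiM UNIV M)" .
  qed
  also have "\<dots> = (\<Sum>a\<in>UNIV. ennreal (pmf p a) * (\<Sum>b\<in>UNIV. ennreal (pmf p b) * \<integral>\<^sup>+\<omega>. G a b \<omega> \<partial>PiM UNIV M))"
    by (simp add: M_def int_bool_pmf)
  also have "\<dots> = (\<Sum>a\<in>UNIV. \<Sum>b\<in>UNIV. ennreal (pmf p a) * ennreal (pmf p b) * \<integral>\<^sup>+\<omega>. G a b \<omega> \<partial>PiM UNIV M)"
    by (simp add: sum_distrib_left mult.assoc)
  finally show ?thesis by (simp add: F_def M_def)
qed



lemma concave_mono:
  fixes r :: "nat \<Rightarrow> real"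
  assumes nn: "\<And>n. r n \<ge> 0" and cc: "\<And>j. r (Suc (Suc j)) - r (Suc j) \<le> r (Suc j) - r j"
  shows "r j \<le> r (Suc j)"
proof (rule ccontr)
  assume "\<not> r j \<le> r (Suc j)"
  then have dn: "r (Suc j) - r j < 0" by simp
  define d where "d = r (Suc j) - r j"
  have dd: "r (Suc (j + n)) - r (j + n) \<le> d" for n
  proof (induction n)
    case 0 then show ?case by (simp add: d_def)
  next
    case (Suc n) then show ?case using cc[of "j + n"] by simp
  qed
  have rr: "r (j + n) \<le> r j + real n * d" for n
  proof (induction n)
    case 0 then show ?case by simp
  next
    case (Suc n) then show ?case using dd[of n] by (simp add: algebra_simps)
  qed
  obtain n :: nat where n: "real n > r j / (- d)" using reals_Archimedean2 by blast
  have pd: "- d > 0" using dn d_def by simp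
  have "real n * (- d) > r j" using n pos_divide_less_eq[OF pd] by simp
  then have "r j + real n * d < 0" by (simp add: algebra_simps)
  with rr[of n] nn[of "j + n"] show False by simp
qed

lemma concave_strict_False:
  fixes r :: "nat \<Rightarrow> real"
  assumes nn: "\<And>n. r n \<ge> 0" and k: "k > 0"
    and cc: "\<And>j. r (Suc (Suc j)) - r (Suc j) \<le> r (Suc j) - r j - k"
  shows False
proof -
  have mono: "r j \<le> r (Suc j)" for j
    by (rule concave_mono[OF nn]) (use cc k in \<open>smt (verit)\<close>)
  have dd: "r (Suc n) - r n \<le> r 1 - r 0 - real n * k" for n
  proof (induction n)
    case 0 then show ?case by simp
  next
    case (Suc n) then show ?case using cc[of n] by (simp add: algebra_simps)
  qed
  obtain n :: nat where n: "real n > (r 1 - r 0) / k" using reals_Archimedean2 by blast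
  have "real n * k > r 1 - r 0" using n pos_divide_less_eq[OF k] by simp
  with dd[of n] mono[of n] show False by simp
qed

lemma concave_from_ineq:
  fixes r :: "nat \<Rightarrow> real"
  assumes q: "q > 0" and ineq: "\<And>w. w \<ge> 1 \<Longrightarrow> 2 * q * r w \<ge> k + q * r (w - 1) + q * r (w + 1)"
  shows "r (Suc (Suc j)) - r (Suc j) \<le> r (Suc j) - r j - k / q"
proof -
  have "2 * q * r (Suc j) \<ge> k + q * r j + q * r (Suc (Suc j))" using ineq[of "Suc j"] by simp
  then have "q * (r (Suc (Suc j)) - r (Suc j)) \<le> q * (r (Suc j) - r j - k / q)"
    using q by (simp add: algebra_simps)
  then show ?thesis using q by simp
qed



lemma pos_meas:
  "(\<lambda>\<omega>. pos s \<omega> t) \<in> measurable (PiM UNIV (\<lambda>_. measure_pmf p)) (count_space UNIV)"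
proof (induction t)
  case 0
  then show ?case by simp
next
  case (Suc t)
  have inner: "(\<lambda>\<omega>. step q (\<omega> (t, fst q)) (\<omega> (t, fst q + snd q + 1))) \<in> measurable (PiM UNIV (\<lambda>_. measure_pmf p)) (count_space UNIV)" for q
  proof -
    have "(\<lambda>\<omega>. step q u (\<omega> (t, fst q + snd q + 1))) \<in> measurable (PiM UNIV (\<lambda>_. measure_pmf p)) (count_space UNIV)" for u
      by (rule measurable_compose_countable[where f="\<lambda>v \<omega>. step q u v", OF _ comp_meas]) simp
    then show ?thesis
      by (rule measurable_compose_countable[where f="\<lambda>u \<omega>. step q u (\<omega> (t, fst q + snd q + 1))", OF _ comp_meas])
  qed
  show ?case
    using measurable_compose_countable[where f="\<lambda>q \<omega>. step q (\<omega> (t, fst q)) (\<omega> (t, fst q + snd q + 1))", OF inner Suc]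
    by (simp only: pos.simps)
qed

lemma H_meas:
  "H s \<in> measurable (PiM UNIV (\<lambda>_. measure_pmf p)) (count_space UNIV)"
proof -
  have Q[measurable]: "(\<lambda>\<omega>. snd (pos s \<omega> t) = 0) \<in> measurable (PiM UNIV (\<lambda>_. measure_pmf p)) (count_space UNIV)" for t
    by (rule measurable_compose[OF pos_meas]) simp
  have E[measurable]: "Measurable.pred (PiM UNIV (\<lambda>_. measure_pmf p)) (\<lambda>\<omega>. \<exists>t. snd (pos s \<omega> t) = 0)"
    by measurable
  have L[measurable]: "(\<lambda>\<omega>. LEAST t. snd (pos s \<omega> t) = 0) \<in> measurable (PiM UNIV (\<lambda>_. measure_pmf p)) (count_space UNIV)"
    by (rule measurable_Least) (rule Q)
  have L2: "(\<lambda>\<omega>. enat (LEAST t. snd (pos s \<omega> t) = 0)) \<in> measurable (PiM UNIV (\<lambda>_. measure_pmf p)) (count_space UNIV)"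
    by (rule measurable_compose[OF L]) simp
  show ?thesis unfolding H_def[abs_def]
    by (rule measurable_If[OF L2 measurable_const]) (use E in auto)
qed

lemma H_fun_meas:
  "(\<lambda>\<omega>. f (H s \<omega>)) \<in> borel_measurable (PiM UNIV (\<lambda>_. measure_pmf p))"
  by (rule measurable_compose[OF H_meas]) simp

lemma inf_ineq:
  fixes V :: "nat \<times> nat \<Rightarrow> ennreal"
  assumes eq: "\<And>x w. w \<noteq> 0 \<Longrightarrow> V (x,w) = A1 * (K + V (x+1,w)) + A2 * (K + V (x+1,w-1))
      + A3 * (K + V (x,w+1)) + A4 * (K + V (x,w))"
    and w: "w \<noteq> 0"
  shows "(INF x. V (x,w)) \<ge> A1 * (K + (INF x. V (x,w))) + A2 * (K + (INF x. V (x,w-1)))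
      + A3 * (K + (INF x. V (x,w+1))) + A4 * (K + (INF x. V (x,w)))"
proof (rule INF_greatest)
  fix x :: nat
  have "A1 * (K + (INF x. V (x,w))) + A2 * (K + (INF x. V (x,w-1)))
      + A3 * (K + (INF x. V (x,w+1))) + A4 * (K + (INF x. V (x,w)))
     \<le> A1 * (K + V (x+1,w)) + A2 * (K + V (x+1,w-1))
      + A3 * (K + V (x,w+1)) + A4 * (K + V (x,w))"
    by (intro add_mono mult_left_mono INF_lower order_refl) auto
  also have "\<dots> = V (x,w)" using eq[OF w] by simp
  finally show "A1 * (K + (INF x. V (x,w))) + A2 * (K + (INF x. V (x,w-1)))
      + A3 * (K + (INF x. V (x,w+1))) + A4 * (K + (INF x. V (x,w))) \<le> V (x,w)" .
qed

lemma real_ineq: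
  fixes m :: "nat \<Rightarrow> ennreal" and e k :: real
  assumes fin: "\<And>n. m n < \<infinity>" and e: "0 < e" "e < 1" and k: "k \<ge> 0" and w: "w \<noteq> 0"
    and ineq: "m w \<ge> ennreal (1-e) * ennreal (1-e) * (ennreal k + m w) + ennreal (1-e) * ennreal e * (ennreal k + m (w-1))
      + ennreal e * ennreal (1-e) * (ennreal k + m (w+1)) + ennreal e * ennreal e * (ennreal k + m w)"
  shows "2 * ((1-e)*e) * enn2real (m w) \<ge> k + ((1-e)*e) * enn2real (m (w-1)) + ((1-e)*e) * enn2real (m (w+1))"
proof -
  define r where "r n = enn2real (m n)" for n
  have mr: "m n = ennreal (r n)" for n using fin[of n] by (simp add: r_def)
  have rn: "r n \<ge> 0" for n by (simp add: r_def)
  have e1: "0 \<le> 1 - e" using e by simp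
  have "ennreal (1-e) * ennreal (1-e) * (ennreal k + m w) + ennreal (1-e) * ennreal e * (ennreal k + m (w-1))
      + ennreal e * ennreal (1-e) * (ennreal k + m (w+1)) + ennreal e * ennreal e * (ennreal k + m w)
    = ennreal ((1-e) * (1-e) * (k + r w) + (1-e) * e * (k + r (w-1)) + e * (1-e) * (k + r (w+1)) + e * e * (k + r w))"
    using e1 e k rn unfolding mr
    by (simp add: ennreal_mult[symmetric] ennreal_plus[symmetric] add_nonneg_nonneg mult_nonneg_nonneg del: ennreal_plus)
  with ineq have "ennreal ((1-e) * (1-e) * (k + r w) + (1-e) * e * (k + r (w-1)) + e * (1-e) * (k + r (w+1)) + e * e * (k + r w)) \<le> ennreal (r w)"
    unfolding mr by simp
  then have le: "(1-e) * (1-e) * (k + r w) + (1-e) * e * (k + r (w-1)) + e * (1-e) * (k + r (w+1)) + e * e * (k + r w) \<le> r w"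
    using rn by (simp add: ennreal_le_iff)
  have id: "(1-e) * (1-e) * (k + r w) + (1-e) * e * (k + r (w-1)) + e * (1-e) * (k + r (w+1)) + e * e * (k + r w)
     = k + r w - 2 * ((1-e)*e) * r w + ((1-e)*e) * r (w-1) + ((1-e)*e) * r (w+1)"
    by (simp add: algebra_simps)
  have "2 * ((1-e)*e) * r w \<ge> k + ((1-e)*e) * r (w-1) + ((1-e)*e) * r (w+1)"
    using le id by linarith
  then show ?thesis by (simp only: r_def)
qed

lemma sum4_ge2: "(b::ennreal) \<le> a + b + c + d"
proof -
  have "b \<le> a + b" by (rule add_increasing[OF zero_le order_refl])
  also have "\<dots> \<le> a + b + c" by (rule add_increasing2[OF zero_le order_refl])
  also have "\<dots> \<le> a + b + c + d" by (rule add_increasing2[OF zero_le order_refl])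
  finally show ?thesis .
qed

lemma sum4_ge3: "(c::ennreal) \<le> a + b + c + d"
proof -
  have "c \<le> a + b + c" by (rule add_increasing[OF zero_le order_refl])
  also have "\<dots> \<le> a + b + c + d" by (rule add_increasing2[OF zero_le order_refl])
  finally show ?thesis .
qed

lemma V_infinite:
  fixes V :: "nat \<times> nat \<Rightarrow> ennreal" and e :: real
  assumes e: "0 < e" "e < 1"
    and eq: "\<And>x w. w \<noteq> 0 \<Longrightarrow> V (x,w) = ennreal (1-e) * ennreal (1-e) * (1 + V (x+1,w))
      + ennreal (1-e) * ennreal e * (1 + V (x+1,w-1))
      + ennreal e * ennreal (1-e) * (1 + V (x,w+1)) + ennreal e * ennreal e * (1 + V (x,w))"
    and V0: "\<And>x. V (x,0) = 0"
    and w: "w \<noteq> 0"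
  shows "V (x,w) = \<infinity>"
proof -
  define m where "m w = (INF x. V (x,w))" for w
  have m0: "m 0 = 0" by (simp add: m_def V0)
  have ineq: "m w \<ge> ennreal (1-e) * ennreal (1-e) * (1 + m w) + ennreal (1-e) * ennreal e * (1 + m (w-1))
      + ennreal e * ennreal (1-e) * (1 + m (w+1)) + ennreal e * ennreal e * (1 + m w)" if "w \<noteq> 0" for w
    unfolding m_def by (rule inf_ineq[OF eq that])
  have A2: "ennreal (1-e) * ennreal e \<noteq> 0" and A3: "ennreal e * ennreal (1-e) \<noteq> 0" using e by auto
  have propg: "m (w-1) < \<infinity> \<and> m (w+1) < \<infinity>" if "w \<noteq> 0" "m w < \<infinity>" for w
  proof -
    have "ennreal (1-e) * ennreal e * (1 + m (w-1)) \<le> m w" by (rule order_trans[OF sum4_ge2 ineq[OF that(1)]])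
    then have a: "ennreal (1-e) * ennreal e * (1 + m (w-1)) < \<infinity>" using that(2) by (rule le_less_trans)
    have "ennreal e * ennreal (1-e) * (1 + m (w+1)) \<le> m w" by (rule order_trans[OF sum4_ge3 ineq[OF that(1)]])
    then have b: "ennreal e * ennreal (1-e) * (1 + m (w+1)) < \<infinity>" using that(2) by (rule le_less_trans)
    have a2: "1 + m (w-1) < \<infinity>" using a A2 ennreal_mult_less_top[of "ennreal (1-e) * ennreal e" "1 + m (w-1)"] by auto
    have b2: "1 + m (w+1) < \<infinity>" using b A3 ennreal_mult_less_top[of "ennreal e * ennreal (1-e)" "1 + m (w+1)"] by auto
    show ?thesis using a2 b2 by (simp add: ennreal_add_less_top)
  qed
  have allfalse: False if v: "v \<noteq> 0" and fw: "m v < \<infinity>" for v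
  proof -
    have up: "m (v + d) < \<infinity>" for d
    proof (induction d)
      case 0 then show ?case using fw by simp
    next
      case (Suc d) then show ?case using propg[of "v + d"] v by simp
    qed
    have down: "m (v - d) < \<infinity>" for d
    proof (induction d)
      case 0 then show ?case using fw by simp
    next
      case (Suc d)
      show ?case
      proof (cases "v - d = 0")
        case True then show ?thesis using m0 by simp
      next
        case False
        have "v - Suc d = v - d - 1" by simp
        then show ?thesis using propg[of "v - d"] Suc False by simp
      qed
    qed
    have fin: "m n < \<infinity>" for n
    proof (cases "n \<ge> v")
      case True then show ?thesis using up[of "n - v"] by simp
    next
      case False then show ?thesis using down[of "v - n"] by simp
    qed
    define q where "q = (1-e)*e"
    have q: "q > 0" using e by (simp add: q_def)
    have ri: "2 * q * enn2real (m u) \<ge> 1 + q * enn2real (m (u-1)) + q * enn2real (m (u+1))" if "u \<noteq> 0" for u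
    proof -
      have "ennreal (1-e) * ennreal (1-e) * (ennreal 1 + m u) + ennreal (1-e) * ennreal e * (ennreal 1 + m (u-1))
      + ennreal e * ennreal (1-e) * (ennreal 1 + m (u+1)) + ennreal e * ennreal e * (ennreal 1 + m u) \<le> m u"
        using ineq[OF that] by (simp only: ennreal_1)
      from real_ineq[OF fin e _ that this] show ?thesis unfolding q_def by simp
    qed
    have cc: "enn2real (m (Suc (Suc j))) - enn2real (m (Suc j)) \<le> enn2real (m (Suc j)) - enn2real (m j) - 1 / q" for j
      by (rule concave_from_ineq[OF q]) (rule ri, simp)
    show False
      by (rule concave_strict_False[of "\<lambda>n. enn2real (m n)" "1/q"]) (use q cc in auto)
  qed
  have allinf: "m v = \<infinity>" if v: "v \<noteq> 0" for v
  proof (cases "m v < \<infinity>")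
    case True then show ?thesis using allfalse[OF v] by blast
  next
    case False then show ?thesis by (simp add: not_less top_unique)
  qed
  have "m w \<le> V (x,w)" unfolding m_def by (rule INF_lower) simp
  then show ?thesis using allinf[OF w] by (simp add: top_unique)
qed

lemma V_one:
  fixes V :: "nat \<times> nat \<Rightarrow> ennreal" and e :: real
  assumes e: "0 < e" "e < 1"
    and eq: "\<And>x w. w \<noteq> 0 \<Longrightarrow> V (x,w) = ennreal (1-e) * ennreal (1-e) * V (x+1,w)
      + ennreal (1-e) * ennreal e * V (x+1,w-1)
      + ennreal e * ennreal (1-e) * V (x,w+1) + ennreal e * ennreal e * V (x,w)"
    and V0: "\<And>x. V (x,0) = 1" and le1: "\<And>s. V s \<le> 1"
  shows "V s = 1"
proof -
  define m where "m w = (INF x. V (x,w))" for w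
  have m0: "m 0 = 1" by (simp add: m_def V0)
  have eq0: "V (x,w) = ennreal (1-e) * ennreal (1-e) * (ennreal 0 + V (x+1,w))
      + ennreal (1-e) * ennreal e * (ennreal 0 + V (x+1,w-1))
      + ennreal e * ennreal (1-e) * (ennreal 0 + V (x,w+1)) + ennreal e * ennreal e * (ennreal 0 + V (x,w))"
    if "w \<noteq> 0" for x w
    using eq[OF that, of x] by simp
  have ineq: "m w \<ge> ennreal (1-e) * ennreal (1-e) * (ennreal 0 + m w) + ennreal (1-e) * ennreal e * (ennreal 0 + m (w-1))
      + ennreal e * ennreal (1-e) * (ennreal 0 + m (w+1)) + ennreal e * ennreal e * (ennreal 0 + m w)" if "w \<noteq> 0" for w
    unfolding m_def by (rule inf_ineq[OF eq0 that])
  have ml: "m w \<le> V (x,w)" for w x unfolding m_def by (rule INF_lower) simp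
  have fin: "m n < \<infinity>" for n
  proof -
    have "m n \<le> 1" using order_trans[OF ml[of n 0] le1[of "(0,n)"]] .
    moreover have "(1::ennreal) < \<infinity>" by simp
    ultimately show ?thesis by (rule order_le_less_trans)
  qed
  define q where "q = (1-e)*e"
  have q: "q > 0" using e by (simp add: q_def)
  have ri: "2 * q * enn2real (m v) \<ge> 0 + q * enn2real (m (v-1)) + q * enn2real (m (v+1))" if "v \<noteq> 0" for v
    unfolding q_def by (rule real_ineq[OF fin e _ that ineq[OF that]]) simp
  have cc: "enn2real (m (Suc (Suc j))) - enn2real (m (Suc j)) \<le> enn2real (m (Suc j)) - enn2real (m j) - 0 / q" for j
    by (rule concave_from_ineq[OF q]) (rule ri, simp)
  have mono: "enn2real (m j) \<le> enn2real (m (Suc j))" for j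
    by (rule concave_mono[of "\<lambda>n. enn2real (m n)"]) (use cc in auto)
  have ge: "enn2real (m n) \<ge> 1" for n
  proof (induction n)
    case 0 then show ?case using m0 by simp
  next
    case (Suc n) then show ?case using mono[of n] by simp
  qed
  have me: "m (snd s) = ennreal (enn2real (m (snd s)))" using fin[of "snd s"] by simp
  have "ennreal 1 \<le> ennreal (enn2real (m (snd s)))" by (rule ennreal_leI[OF ge])
  then have "1 \<le> m (snd s)" by (subst me) (simp only: ennreal_1)
  then have "1 \<le> V s" using ml[of "snd s" "fst s"] by (metis order_trans prod.collapse)
  then show ?thesis using le1[of s] by (intro antisym)
qed

abbreviation CS :: "real \<Rightarrow> (nat \<times> nat \<Rightarrow> bool) measure" where
  "CS e \<equiv> PiM UNIV (\<lambda>_. measure_pmf (bernoulli_pmf (1-e)))"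

definition hE :: "real \<Rightarrow> nat \<times> nat \<Rightarrow> ennreal" where
  "hE e s = (\<integral>\<^sup>+\<omega>. ennreal_of_enat (H s \<omega>) \<partial>CS e)"

definition gP :: "real \<Rightarrow> nat \<times> nat \<Rightarrow> ennreal" where
  "gP e s = (\<integral>\<^sup>+\<omega>. (if H s \<omega> < \<infinity> then 1 else 0) \<partial>CS e)"

lemma CS_prob: "prob_space (CS e)"
  by (rule prob_space_PiM) (simp add: prob_space_measure_pmf)

lemma sum_bool2: "(\<Sum>a\<in>UNIV. \<Sum>b\<in>UNIV. f a b) = f True True + f True False + f False True + (f False False :: ennreal)"
  by (simp add: UNIV_bool ac_simps)

lemma K_meas:
  "(\<lambda>\<omega>. H (nxt s \<omega>) (shift \<omega>)) \<in> measurable (CS e) (count_space UNIV)"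
proof -
  have sh: "shift \<in> measurable (CS e) (CS e)" by (rule shift_meas) simp
  have "(\<lambda>\<omega>. H (step s a b) (shift \<omega>)) \<in> measurable (CS e) (count_space UNIV)" for a b
    by (rule measurable_compose[OF sh H_meas])
  then have "(\<lambda>\<omega>. H (step s a (\<omega> (0, fst s + snd s + 1))) (shift \<omega>)) \<in> measurable (CS e) (count_space UNIV)" for a
    by (rule measurable_compose_countable[where f="\<lambda>b \<omega>. H (step s a b) (shift \<omega>)", OF _ comp_meas])
  then show ?thesis
    by (rule measurable_compose_countable[where f="\<lambda>a \<omega>. H (step s a (\<omega> (0, fst s + snd s + 1))) (shift \<omega>)", OF _ comp_meas])
qed

lemma int_one_plus:
  assumes "f \<in> borel_measurable (CS e)"
  shows "(\<integral>\<^sup>+\<omega>. 1 + f \<omega> \<partial>CS e) = 1 + (\<integral>\<^sup>+\<omega>. f \<omega> \<partial>CS e)"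
proof -
  interpret prob_space "CS e" by (rule CS_prob)
  have "(\<integral>\<^sup>+\<omega>. 1 + f \<omega> \<partial>CS e) = (\<integral>\<^sup>+\<omega>. 1 \<partial>CS e) + (\<integral>\<^sup>+\<omega>. f \<omega> \<partial>CS e)"
    by (rule nn_integral_add) (use assms in auto)
  then show ?thesis by (simp add: emeasure_space_1)
qed

lemma hE_step:
  assumes e: "0 \<le> e" "e \<le> 1" and s: "snd s \<noteq> 0"
  shows "hE e s = (\<Sum>a\<in>UNIV. \<Sum>b\<in>UNIV. ennreal (pmf (bernoulli_pmf (1-e)) a) * ennreal (pmf (bernoulli_pmf (1-e)) b)
      * (1 + hE e (step s a b)))"
proof -
  let ?G = "\<lambda>a b \<omega>'. 1 + ennreal_of_enat (H (step s a b) \<omega>')"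
  have "hE e s = (\<integral>\<^sup>+\<omega>. ?G (\<omega> (0, fst s)) (\<omega> (0, fst s + snd s + 1)) (shift \<omega>) \<partial>CS e)"
    unfolding hE_def by (rule nn_integral_cong) (simp add: H_step[OF s])
  also have "\<dots> = (\<Sum>a\<in>UNIV. \<Sum>b\<in>UNIV. ennreal (pmf (bernoulli_pmf (1-e)) a) * ennreal (pmf (bernoulli_pmf (1-e)) b)
      * (\<integral>\<^sup>+\<omega>. ?G a b \<omega> \<partial>CS e))"
    by (rule FS) (simp_all add: H_fun_meas[of "\<lambda>n. 1 + ennreal_of_enat n"])
  also have "\<dots> = (\<Sum>a\<in>UNIV. \<Sum>b\<in>UNIV. ennreal (pmf (bernoulli_pmf (1-e)) a) * ennreal (pmf (bernoulli_pmf (1-e)) b)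
      * (1 + hE e (step s a b)))"
    unfolding hE_def by (subst int_one_plus) (simp_all add: H_fun_meas[of ennreal_of_enat])
  finally show ?thesis .
qed

lemma eSuc_less_inf: "eSuc n < \<infinity> \<longleftrightarrow> n < (\<infinity>::enat)"
  by (cases n) (auto simp: eSuc_enat)

lemma eSuc_eq_inf: "eSuc n = \<infinity> \<longleftrightarrow> n = (\<infinity>::enat)"
  by (cases n) (auto simp: eSuc_enat)

lemma gP_step:
  assumes e: "0 \<le> e" "e \<le> 1" and s: "snd s \<noteq> 0"
  shows "gP e s = (\<Sum>a\<in>UNIV. \<Sum>b\<in>UNIV. ennreal (pmf (bernoulli_pmf (1-e)) a) * ennreal (pmf (bernoulli_pmf (1-e)) b)
      * gP e (step s a b))"
proof -
  let ?G = "\<lambda>a b \<omega>'. (if H (step s a b) \<omega>' < \<infinity> then 1 else 0) :: ennreal"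
  have "gP e s = (\<integral>\<^sup>+\<omega>. ?G (\<omega> (0, fst s)) (\<omega> (0, fst s + snd s + 1)) (shift \<omega>) \<partial>CS e)"
    unfolding gP_def by (rule nn_integral_cong) (simp add: H_step[OF s] eSuc_less_inf eSuc_eq_inf)
  also have "\<dots> = (\<Sum>a\<in>UNIV. \<Sum>b\<in>UNIV. ennreal (pmf (bernoulli_pmf (1-e)) a) * ennreal (pmf (bernoulli_pmf (1-e)) b)
      * (\<integral>\<^sup>+\<omega>. ?G a b \<omega> \<partial>CS e))"
    by (rule FS) (use H_fun_meas[of "\<lambda>n. if n < \<infinity> then 1 else (0::ennreal)"] in auto)
  finally show ?thesis unfolding gP_def .
qed

lemma pmfT: "0 \<le> e \<Longrightarrow> e \<le> 1 \<Longrightarrow> pmf (bernoulli_pmf (1-e)) True = 1 - e" by simp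
lemma pmfF: "0 \<le> e \<Longrightarrow> e \<le> 1 \<Longrightarrow> pmf (bernoulli_pmf (1-e)) False = e" by simp

lemma hE_eq:
  assumes e: "0 < e" "e < 1" and w: "w \<noteq> 0"
  shows "hE e (x,w) = ennreal (1-e) * ennreal (1-e) * (1 + hE e (x+1,w))
      + ennreal (1-e) * ennreal e * (1 + hE e (x+1,w-1))
      + ennreal e * ennreal (1-e) * (1 + hE e (x,w+1)) + ennreal e * ennreal e * (1 + hE e (x,w))"
  using hE_step[of e "(x,w)"] e w by (simp add: sum_bool2 step_def pmfT pmfF)

lemma gP_eq:
  assumes e: "0 < e" "e < 1" and w: "w \<noteq> 0"
  shows "gP e (x,w) = ennreal (1-e) * ennreal (1-e) * gP e (x+1,w)
      + ennreal (1-e) * ennreal e * gP e (x+1,w-1)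
      + ennreal e * ennreal (1-e) * gP e (x,w+1) + ennreal e * ennreal e * gP e (x,w)"
  using gP_step[of e "(x,w)"] e w by (simp add: sum_bool2 step_def pmfT pmfF)

lemma hE0: "hE e (x,0) = 0"
  by (simp add: hE_def H_zero)

lemma gP0: "gP e (x,0) = 1"
proof -
  interpret prob_space "CS e" by (rule CS_prob)
  show ?thesis by (simp add: gP_def H_zero emeasure_space_1)
qed

lemma gP_le1: "gP e s \<le> 1"
proof -
  interpret prob_space "CS e" by (rule CS_prob)
  have "gP e s \<le> (\<integral>\<^sup>+\<omega>. 1 \<partial>CS e)" unfolding gP_def by (rule nn_integral_mono) simp
  then show ?thesis by (simp add: emeasure_space_1)
qed

lemma hE_inf: "0 < e \<Longrightarrow> e < 1 \<Longrightarrow> snd s \<noteq> 0 \<Longrightarrow> hE e s = \<infinity>"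
  using V_infinite[of e "hE e" "snd s" "fst s"] hE_eq hE0 by simp

lemma gP_one: "0 < e \<Longrightarrow> e < 1 \<Longrightarrow> gP e s = 1"
  using V_one[of e "gP e" s] gP_eq gP0 gP_le1 by simp

lemma sum_probs:
  assumes "0 \<le> e" "e \<le> 1"
  shows "ennreal (1-e) * ennreal (1-e) * 1 + ennreal (1-e) * ennreal e * 1 + ennreal e * ennreal (1-e) * 1 + ennreal e * ennreal e * 1 = 1"
proof -
  have r: "(1-e)*(1-e) + (1-e)*e + e*(1-e) + e*e = (1::real)" by algebra
  have "ennreal (1-e) * ennreal (1-e) + ennreal (1-e) * ennreal e + ennreal e * ennreal (1-e) + ennreal e * ennreal e
      = ennreal ((1-e)*(1-e) + (1-e)*e + e*(1-e) + e*e)"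
    using assms by (simp add: ennreal_mult[symmetric] ennreal_plus[symmetric] del: ennreal_plus)
  then show ?thesis using r by simp
qed

theorem mainTheorem9:
  fixes \<epsilon> :: real and c :: enat and \<zeta>0 :: "nat \<Rightarrow> bool"
  assumes "0 < \<epsilon>" and "\<epsilon> < 1" and "c \<ge> 2"
    and "card {k. \<zeta>0 k} = 2" and "\<not> \<zeta>0 0"
  shows "emeasure (coin_space \<epsilon>) {\<omega> \<in> space (coin_space \<epsilon>). hit_time c \<zeta>0 \<omega> < \<infinity>} = 1
       \<and> (\<integral>\<^sup>+ \<omega>. ennreal_of_enat (hit_time c \<zeta>0 \<omega>) \<partial>coin_space \<epsilon>) = \<infinity>"
proof -
  obtain x w where x: "x \<ge> 1" and z: "\<zeta>0 = config (x,w)" using init_config[OF assms(4,5)] by blast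
  have cc: "enat g < c" if "g \<le> 1" for g
  proof -
    have "enat g < 2" using that by (simp add: numeral_eq_enat)
    then show ?thesis using assms(3) by (rule less_le_trans)
  qed
  define s0 where "s0 = (x,w)"
  have ht: "hit_time c \<zeta>0 \<omega> = eSuc (H (nxt s0 \<omega>) (shift \<omega>))" for \<omega>
    using hit_time_eq[of s0 c \<omega>] x cc z s0_def by simp
  have CSe: "coin_space \<epsilon> = CS \<epsilon>" by (simp add: coin_space_def)
  have e: "0 \<le> \<epsilon>" "\<epsilon> \<le> 1" using assms(1,2) by auto
  have xy: "fst s0 \<noteq> fst s0 + snd s0 + 1" by simp
  define S where "S = {\<omega> \<in> space (CS \<epsilon>). hit_time c \<zeta>0 \<omega> < \<infinity>}"
  have Pm: "(\<lambda>\<omega>. H (nxt s0 \<omega>) (shift \<omega>) < \<infinity>) \<in> measurable (CS \<epsilon>) (count_space UNIV)"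
    by (rule measurable_compose[OF K_meas]) simp
  have S_eq: "S = (\<lambda>\<omega>. H (nxt s0 \<omega>) (shift \<omega>) < \<infinity>) -` {True} \<inter> space (CS \<epsilon>)"
    unfolding S_def ht eSuc_less_inf by blast
  have Sm: "S \<in> sets (CS \<epsilon>)" unfolding S_eq by (rule measurable_sets[OF Pm]) simp
  have "emeasure (CS \<epsilon>) S = (\<integral>\<^sup>+\<omega>. indicator S \<omega> \<partial>CS \<epsilon>)"
    by (rule nn_integral_indicator[symmetric, OF Sm])
  also have "\<dots> = (\<integral>\<^sup>+\<omega>. (\<lambda>a b \<omega>'. if H (step s0 a b) \<omega>' < \<infinity> then 1 else (0::ennreal))
        (\<omega> (0, fst s0)) (\<omega> (0, fst s0 + snd s0 + 1)) (shift \<omega>) \<partial>CS \<epsilon>)"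
    by (rule nn_integral_cong) (simp add: S_def indicator_def ht eSuc_less_inf eSuc_eq_inf)
  also have "\<dots> = (\<Sum>a\<in>UNIV. \<Sum>b\<in>UNIV. ennreal (pmf (bernoulli_pmf (1-\<epsilon>)) a) * ennreal (pmf (bernoulli_pmf (1-\<epsilon>)) b)
      * gP \<epsilon> (step s0 a b))"
    unfolding gP_def
    by (rule FS[OF xy]) (use H_fun_meas[of "\<lambda>n. if n < \<infinity> then 1 else (0::ennreal)"] in auto)
  also have "\<dots> = 1"
  proof -
    have g1: "gP \<epsilon> (step s0 a b) = 1" for a b using gP_one assms(1,2) by blast
    show ?thesis unfolding g1 sum_bool2 pmfT[OF e] pmfF[OF e] by (rule sum_probs[OF e])
  qed
  finally have P1: "emeasure (CS \<epsilon>) S = 1" .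
  have "(\<integral>\<^sup>+ \<omega>. ennreal_of_enat (hit_time c \<zeta>0 \<omega>) \<partial>CS \<epsilon>) =
      (\<integral>\<^sup>+\<omega>. (\<lambda>a b \<omega>'. 1 + ennreal_of_enat (H (step s0 a b) \<omega>'))
        (\<omega> (0, fst s0)) (\<omega> (0, fst s0 + snd s0 + 1)) (shift \<omega>) \<partial>CS \<epsilon>)"
    by (rule nn_integral_cong) (simp add: ht)
  also have "\<dots> = (\<Sum>a\<in>UNIV. \<Sum>b\<in>UNIV. ennreal (pmf (bernoulli_pmf (1-\<epsilon>)) a) * ennreal (pmf (bernoulli_pmf (1-\<epsilon>)) b)
      * (\<integral>\<^sup>+\<omega>. 1 + ennreal_of_enat (H (step s0 a b) \<omega>) \<partial>CS \<epsilon>))"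
    by (rule FS[OF xy]) (simp_all add: H_fun_meas[of "\<lambda>n. 1 + ennreal_of_enat n"])
  also have "\<dots> = (\<Sum>a\<in>UNIV. \<Sum>b\<in>UNIV. ennreal (pmf (bernoulli_pmf (1-\<epsilon>)) a) * ennreal (pmf (bernoulli_pmf (1-\<epsilon>)) b)
      * (1 + hE \<epsilon> (step s0 a b)))"
    unfolding hE_def by (subst int_one_plus) (simp_all add: H_fun_meas[of ennreal_of_enat])
  also have "\<dots> = \<infinity>"
  proof -
    have hinf: "hE \<epsilon> (step s0 False True) = \<infinity>"
      by (rule hE_inf[OF assms(1,2)]) (simp add: step_def)
    have nz: "ennreal \<epsilon> * ennreal (1-\<epsilon>) \<noteq> 0" using assms(1,2) by (simp add: ennreal_eq_0_iff)
    have t: "ennreal (pmf (bernoulli_pmf (1-\<epsilon>)) False) * ennreal (pmf (bernoulli_pmf (1-\<epsilon>)) True)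
      * (1 + hE \<epsilon> (step s0 False True)) = \<infinity>"
      unfolding hinf pmfT[OF e] pmfF[OF e] infinity_ennreal_def add_top_right_ennreal
      by (rule ennreal_top_mult_left[OF nz])
    show ?thesis unfolding sum_bool2 t by simp
  qed
  finally have P2: "(\<integral>\<^sup>+ \<omega>. ennreal_of_enat (hit_time c \<zeta>0 \<omega>) \<partial>CS \<epsilon>) = \<infinity>" .
  show ?thesis using P1 P2 unfolding CSe S_def by simp
qed

end
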